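(* For all $V\in L^1_{\rm loc}(\Omega,\mathbb R_+)\setminus\{0\}$, all $p,r\in(1,\infty)$ with $p\ne r$, and all $B\in\mathcal A_r(\Omega)$, there exist $b=b(p,r,B,V),\,c=c(p,r,B,V)\in L^\infty(\Omega;\mathbb C^d)$ such that $(A,b,c,V)\in\mathcal S_p(\Omega)$ for all $A\in\mathcal A_p(\Omega)$, while $(B,b,c,V)\notin\mathcal S_r(\Omega)$. In particular, for all $V\in L^1_{\rm loc}(\Omega,\mathbb R_+)\setminus\{0\}$, $p,r\in(1,\infty)$ with $p\ne r$, and $A\in\mathcal A_p(\Omega)\cap\mathcal A_r(\Omega)$, there exist $b,c\in L^\infty(\Omega;\mathbb C^d)$ such that $(A,b,c,V)\in\mathcal S_p(\Omega)\setminus\mathcal S_r(\Omega)$.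
   Context: $\Omega\subseteq\mathbb R^d$ nonempty open; $\langle \xi,\sigma\rangle=\sum_j\xi_j\overline{\sigma_j}$. $\mathcal{A}(\Omega)$: measurable $A:\Omega\to\mathbb{C}^{d\times d}$ with $\lambda,\Lambda>0$ such that $\Re\langle A(x)\xi,\xi\rangle\ge\lambda|\xi|^2$, $|\langle A(x)\xi,\sigma\rangle|\le\Lambda|\xi||\sigma|$ a.e. $\mathcal{J}_s\xi=\frac s2(\xi+(1-\frac2s)\overline\xi)$. $\Delta_s(A)=\operatorname{ess\,inf}_{x}\min_{|\xi|=1}\Re\langle A(x)\xi,\xi+|1-2/s|\overline\xi\rangle$, $\mathcal A_s(\Omega)=\{A\in\mathcal A(\Omega):\Delta_s(A)>0\}$. $\Gamma_s^{(A,b,c,V)}(x,\xi)=\Re\langle A(x)\xi,\mathcal J_s\xi\rangle+\Re\langle b(x)+\mathcal J_sc(x),\xi\rangle+V(x)$. $\mathcal S_s(\Omega)$: quadruples $(A,b,c,V)$ ($A\in\mathcal A(\Omega)$, $b,c\in L^\infty(\Omega;\mathbb C^d)$, $0\le V\in L^1_{\rm loc}$) with $A\in\mathcal A_s(\Omega)$, $|b-c|\le M\sqrt V$ a.e. for some $M>0$, and $\Gamma_s(x,\xi)\ge\mu(|\xi|^2+V(x))$ for a.e. $x$, all $\xi$, for some $\mu>0$. *)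

theory Defs
  imports "HOL-Analysis.Analysis"
begin

text \<open>Points of Omega live in real^'n (d = CARD('n)); vectors xi live in complex^'n,
  matrices A(x) in complex^'n^'n.\<close>

definition cinner :: "complex^'n \<Rightarrow> complex^'n \<Rightarrow> complex" where
  "cinner \<xi> \<sigma> = (\<Sum>j\<in>UNIV. \<xi>$j * cnj (\<sigma>$j))"

definition vconj :: "complex^'n \<Rightarrow> complex^'n" where
  "vconj \<xi> = (\<chi> j. cnj (\<xi>$j))"

definition Jop :: "real \<Rightarrow> complex^'n \<Rightarrow> complex^'n" where
  "Jop s \<xi> = (s/2) *\<^sub>R (\<xi> + (1 - 2/s) *\<^sub>R vconj \<xi>)"

definition Linf :: "(real^'n) set \<Rightarrow> (real^'n \<Rightarrow> complex^'n) \<Rightarrow> bool" where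
  "Linf \<Omega> b \<longleftrightarrow> b \<in> borel_measurable (lebesgue_on \<Omega>) \<and>
     (\<exists>C. AE x in lebesgue_on \<Omega>. norm (b x) \<le> C)"

definition L1loc_nonneg :: "(real^'n) set \<Rightarrow> (real^'n \<Rightarrow> real) \<Rightarrow> bool" where
  "L1loc_nonneg \<Omega> V \<longleftrightarrow> V \<in> borel_measurable (lebesgue_on \<Omega>) \<and>
     (AE x in lebesgue_on \<Omega>. 0 \<le> V x) \<and>
     (\<forall>K. compact K \<and> K \<subseteq> \<Omega> \<longrightarrow> integrable (lebesgue_on K) V)"

definition ellA :: "(real^'n) set \<Rightarrow> (real^'n \<Rightarrow> complex^'n^'n) \<Rightarrow> bool" where
  "ellA \<Omega> A \<longleftrightarrow> A \<in> borel_measurable (lebesgue_on \<Omega>) \<and>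
     (\<exists>lam>0. \<exists>Lam>0. AE x in lebesgue_on \<Omega>.
        (\<forall>\<xi>. Re (cinner (A x *v \<xi>) \<xi>) \<ge> lam * (norm \<xi>)\<^sup>2) \<and>
        (\<forall>\<xi> \<sigma>. cmod (cinner (A x *v \<xi>) \<sigma>) \<le> Lam * norm \<xi> * norm \<sigma>))"

text \<open>A_s(Omega): Delta_s(A) > 0, where Delta_s(A) is the essential infimum over x of
  the minimum over unit xi. Delta_s(A) > 0 is written out as: there is delta > 0 bounding
  the quantity from below for a.e. x and all unit xi.\<close>
definition ellA_s :: "(real^'n) set \<Rightarrow> real \<Rightarrow> (real^'n \<Rightarrow> complex^'n^'n) \<Rightarrow> bool" where
  "ellA_s \<Omega> s A \<longleftrightarrow> ellA \<Omega> A \<and>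
     (\<exists>\<delta>>0. AE x in lebesgue_on \<Omega>. \<forall>\<xi>. norm \<xi> = 1 \<longrightarrow>
        Re (cinner (A x *v \<xi>) (\<xi> + \<bar>1 - 2/s\<bar> *\<^sub>R vconj \<xi>)) \<ge> \<delta>)"

definition Gamma :: "real \<Rightarrow> (real^'n \<Rightarrow> complex^'n^'n) \<Rightarrow> (real^'n \<Rightarrow> complex^'n)
    \<Rightarrow> (real^'n \<Rightarrow> complex^'n) \<Rightarrow> (real^'n \<Rightarrow> real) \<Rightarrow> real^'n \<Rightarrow> complex^'n \<Rightarrow> real" where
  "Gamma s A b c V x \<xi> = Re (cinner (A x *v \<xi>) (Jop s \<xi>))
      + Re (cinner (b x + Jop s (c x)) \<xi>) + V x"

definition classS :: "(real^'n) set \<Rightarrow> real \<Rightarrow> (real^'n \<Rightarrow> complex^'n^'n) \<Rightarrow> (real^'n \<Rightarrow> complex^'n)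
    \<Rightarrow> (real^'n \<Rightarrow> complex^'n) \<Rightarrow> (real^'n \<Rightarrow> real) \<Rightarrow> bool" where
  "classS \<Omega> s A b c V \<longleftrightarrow> ellA \<Omega> A \<and> Linf \<Omega> b \<and> Linf \<Omega> c \<and> L1loc_nonneg \<Omega> V \<and>
     ellA_s \<Omega> s A \<and>
     (\<exists>M>0. AE x in lebesgue_on \<Omega>. norm (b x - c x) \<le> M * sqrt (V x)) \<and>
     (\<exists>\<mu>>0. AE x in lebesgue_on \<Omega>. \<forall>\<xi>. Gamma s A b c V x \<xi> \<ge> \<mu> * ((norm \<xi>)\<^sup>2 + V x))"

end

theory Submission
  imports Defs
begin

lemma cinner_add_left: "cinner (x + y) z = cinner x z + cinner y z"
  by (simp add: cinner_def distrib_right sum.distrib)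
lemma cinner_add_right: "cinner x (y + z) = cinner x y + cinner x z"
  by (simp add: cinner_def distrib_left sum.distrib)
lemma cinner_smult_left: "cinner (c *s x) y = c * cinner x y"
  by (simp add: cinner_def sum_distrib_left mult.assoc)
lemma cinner_smult_right: "cinner x (c *s y) = cnj c * cinner x y"
  by (simp add: cinner_def sum_distrib_left algebra_simps)
lemma scaleR_smult: "(a::real) *\<^sub>R (x::complex^'n) = complex_of_real a *s x"
  unfolding vec_eq_iff by (simp add: vector_smult_component) (simp add: scaleR_conv_of_real)
lemma vconj_smult: "vconj (c *s x) = cnj c *s vconj x"
  by (simp add: vconj_def vec_eq_iff)
lemma vconj_add: "vconj (x + y) = vconj x + vconj y"
  by (simp add: vconj_def vec_eq_iff)
lemma mv_smult: "(M::complex^'n^'n) *v (c *s x) = c *s (M *v x)"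
  by (simp add: matrix_vector_mult_def vec_eq_iff sum_distrib_left algebra_simps)
lemma norm_smult: "norm (c *s (x::complex^'n)) = cmod c * norm x"
  by (simp add: norm_vec_def L2_set_def norm_mult power_mult_distrib sum_distrib_left[symmetric] real_sqrt_mult)

lemma Q_smult: "cinner (M *v (c *s \<xi>)) (c *s \<xi> + \<kappa> *\<^sub>R vconj (c *s \<xi>))
   = c * cnj c * cinner (M *v \<xi>) \<xi> + complex_of_real \<kappa> * c * c * cinner (M *v \<xi>) (vconj \<xi>)"
  by (simp add: scaleR_smult vconj_smult mv_smult cinner_add_right cinner_smult_left cinner_smult_right algebra_simps vector_smult_assoc)

lemma Q_plain: "cinner (M *v \<xi>) (\<xi> + \<kappa> *\<^sub>R vconj \<xi>)
   = cinner (M *v \<xi>) \<xi> + complex_of_real \<kappa> * cinner (M *v \<xi>) (vconj \<xi>)"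
  by (simp add: scaleR_smult cinner_add_right cinner_smult_right)

lemma ee: "cinner (axis k (1::complex)) (axis k 1) = 1"
proof -
  have "(\<Sum>j\<in>UNIV. (axis k (1::complex))$j * cnj ((axis k 1)$j)) = (\<Sum>j\<in>UNIV. if j = k then 1 else 0)"
    by (rule sum.cong) (auto simp: axis_def)
  then show ?thesis by (simp add: cinner_def)
qed
lemma vconj_e: "vconj (axis k (1::complex)) = axis k 1"
  by (simp add: vconj_def axis_def vec_eq_iff)
lemma Jop_e: "s \<noteq> 0 \<Longrightarrow> Jop s (a *\<^sub>R axis k (1::complex)) = (a * (s - 1)) *\<^sub>R axis k 1"
proof -
  have "vconj (a *\<^sub>R axis k (1::complex)) = a *\<^sub>R axis k 1"
    using vconj_e[of k] by (simp add: scaleR_smult vconj_smult)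
  moreover assume "s \<noteq> 0"
  moreover have "a + (a * s / 2 + (a * (s * s) - a * (s * 2)) / (s * 2)) = a * s" using \<open>s \<noteq> 0\<close>
    by (simp add: field_simps)
  ultimately show ?thesis
    apply (simp add: Jop_def vec_eq_iff axis_def field_simps)
    apply (simp only: scaleR_add_left[symmetric])
    by (simp add: field_simps)
qed
lemma cinner_scaleR_left: "cinner (a *\<^sub>R x) y = complex_of_real a * cinner x y"
  by (simp add: scaleR_smult cinner_smult_left)
lemma cinner_scaleR_right: "cinner x (a *\<^sub>R y) = complex_of_real a * cinner x y"
  by (simp add: scaleR_smult cinner_smult_right)
lemma mv_scaleR: "(M::complex^'n^'n) *v (a *\<^sub>R x) = a *\<^sub>R (M *v x)"
  by (simp add: scaleR_smult mv_smult)
lemma cinner_zero_left: "cinner 0 y = 0"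
  by (simp add: cinner_def)

lemma pw_both:
  assumes H: "\<forall>\<xi>. norm \<xi> = 1 \<longrightarrow> Re (cinner (M *v \<xi>) (\<xi> + k *\<^sub>R vconj \<xi>)) \<ge> \<delta>"
  shows "Re (cinner (M *v \<xi>) \<xi> + complex_of_real k * cinner (M *v \<xi>) (vconj \<xi>)) \<ge> \<delta> * (norm \<xi>)\<^sup>2
       \<and> Re (cinner (M *v \<xi>) \<xi> - complex_of_real k * cinner (M *v \<xi>) (vconj \<xi>)) \<ge> \<delta> * (norm \<xi>)\<^sup>2"
proof (cases "\<xi> = 0")
  case True
  then show ?thesis by (simp add: cinner_zero_left)
next
  case False
  define n where "n = norm \<xi>"
  have n: "n > 0" using False by (simp add: n_def)
  define P where "P = cinner (M *v \<xi>) \<xi>"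
  define R where "R = cinner (M *v \<xi>) (vconj \<xi>)"
  define c1 where "c1 = complex_of_real (1/n)"
  define c2 where "c2 = \<i> * complex_of_real (1/n)"
  have "norm (c1 *s \<xi>) = 1" using n unfolding norm_smult c1_def norm_of_real n_def by simp
  then have h1: "Re (c1 * cnj c1 * P + complex_of_real k * c1 * c1 * R) \<ge> \<delta>"
    using H[rule_format, of "c1 *s \<xi>"] by (simp add: Q_smult P_def R_def)
  have "norm (c2 *s \<xi>) = 1" using n unfolding norm_smult c2_def norm_mult norm_of_real n_def by simp
  then have h2: "Re (c2 * cnj c2 * P + complex_of_real k * c2 * c2 * R) \<ge> \<delta>"
    using H[rule_format, of "c2 *s \<xi>"] by (simp add: Q_smult P_def R_def)
  have e1: "c1 * cnj c1 * P + complex_of_real k * c1 * c1 * R = complex_of_real (1/n^2) * (P + complex_of_real k * R)"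
    by (simp add: c1_def algebra_simps power2_eq_square add_divide_distrib)
  have e2: "c2 * cnj c2 * P + complex_of_real k * c2 * c2 * R = complex_of_real (1/n^2) * (P - complex_of_real k * R)"
    by (simp add: c2_def algebra_simps power2_eq_square add_divide_distrib diff_divide_distrib)
  have "(1/n^2) * Re (P + complex_of_real k * R) \<ge> \<delta>" using h1 e1 by simp
  then have g1: "Re (P + complex_of_real k * R) \<ge> \<delta> * n^2" using n by (simp add: field_simps)
  have "(1/n^2) * Re (P - complex_of_real k * R) \<ge> \<delta>" using h2 e2 by simp
  then have g2: "Re (P - complex_of_real k * R) \<ge> \<delta> * n^2" using n by (simp add: field_simps)
  show ?thesis using g1 g2 by (simp add: P_def R_def n_def)
qed

lemma pw:
  assumes H: "\<forall>\<xi>. norm \<xi> = 1 \<longrightarrow> Re (cinner (M *v \<xi>) (\<xi> + \<bar>k\<bar> *\<^sub>R vconj \<xi>)) \<ge> \<delta>"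
  shows "Re (cinner (M *v \<xi>) (\<xi> + k *\<^sub>R vconj \<xi>)) \<ge> \<delta> * (norm \<xi>)\<^sup>2"
proof (cases "k \<ge> 0")
  case True
  then show ?thesis using pw_both[OF H, of \<xi>] by (simp add: Q_plain)
next
  case False
  then have "complex_of_real k = - complex_of_real \<bar>k\<bar>" by simp
  then show ?thesis using pw_both[OF H, of \<xi>] by (simp add: Q_plain)
qed

lemma Jop_coercive:
  assumes "ellA_s \<Omega> p A" "p > 1"
  shows "\<exists>d>0. AE x in lebesgue_on \<Omega>. \<forall>\<xi>. Re (cinner (A x *v \<xi>) (Jop p \<xi>)) \<ge> d * (norm \<xi>)\<^sup>2"
proof -
  obtain \<delta> where d: "\<delta> > 0" and H: "AE x in lebesgue_on \<Omega>. \<forall>\<xi>. norm \<xi> = 1 \<longrightarrow>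
        Re (cinner (A x *v \<xi>) (\<xi> + \<bar>1 - 2/p\<bar> *\<^sub>R vconj \<xi>)) \<ge> \<delta>"
    using assms(1) unfolding ellA_s_def by blast
  have "AE x in lebesgue_on \<Omega>. \<forall>\<xi>. Re (cinner (A x *v \<xi>) (Jop p \<xi>)) \<ge> (p/2*\<delta>) * (norm \<xi>)\<^sup>2"
    using H
  proof eventually_elim
    case (elim x)
    show ?case
    proof
      fix \<xi>
      have "Re (cinner (A x *v \<xi>) (\<xi> + (1 - 2/p) *\<^sub>R vconj \<xi>)) \<ge> \<delta> * (norm \<xi>)\<^sup>2"
        using pw[OF elim] .
      moreover have "Re (cinner (A x *v \<xi>) (Jop p \<xi>)) = p/2 * Re (cinner (A x *v \<xi>) (\<xi> + (1 - 2/p) *\<^sub>R vconj \<xi>))"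
        by (simp add: Jop_def cinner_scaleR_right)
      ultimately show "Re (cinner (A x *v \<xi>) (Jop p \<xi>)) \<ge> (p/2*\<delta>) * (norm \<xi>)\<^sup>2"
        using assms(2) by (simp add: mult_left_mono)
    qed
  qed
  moreover have "p/2*\<delta> > 0" using d assms(2) by simp
  ultimately show ?thesis by blast
qed


lemma choose_N:
  assumes "L1loc_nonneg \<Omega> V" and "\<not> (AE x in lebesgue_on \<Omega>. V x = 0)"
  shows "\<exists>N::nat. \<not> (AE x in lebesgue_on \<Omega>. \<not> (0 < V x \<and> V x \<le> real N))"
proof (rule ccontr)
  assume "\<not> ?thesis"
  then have "\<forall>N::nat. AE x in lebesgue_on \<Omega>. \<not> (0 < V x \<and> V x \<le> real N)" by blast
  then have a: "AE x in lebesgue_on \<Omega>. \<forall>N::nat. \<not> (0 < V x \<and> V x \<le> real N)"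
    by (rule AE_all_countable[THEN iffD2])
  have b: "AE x in lebesgue_on \<Omega>. 0 \<le> V x" using assms(1) by (simp add: L1loc_nonneg_def)
  have "AE x in lebesgue_on \<Omega>. V x = 0" using a b
  proof eventually_elim
    case (elim x)
    obtain N :: nat where "V x \<le> real N" using real_arch_simple by blast
    then show ?case using elim by force
  qed
  then show False using assms(2) by blast
qed

lemma part1:
  fixes \<Omega> :: "(real^'n) set" and V :: "real^'n \<Rightarrow> real" and p r :: real
  assumes "L1loc_nonneg \<Omega> V" and "\<not> (AE x in lebesgue_on \<Omega>. V x = 0)"
    and "1 < p" and "1 < r" and "p \<noteq> r" and B: "ellA_s \<Omega> r B"
  shows "\<exists>b c. Linf \<Omega> b \<and> Linf \<Omega> c \<and>
               (\<forall>A. ellA_s \<Omega> p A \<longrightarrow> classS \<Omega> p A b c V) \<and>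
               \<not> classS \<Omega> r B b c V"
proof -
  have "ellA \<Omega> B" using B unfolding ellA_s_def by blast
  then obtain lam Lam where Lam: "Lam > 0" and LB0: "AE x in lebesgue_on \<Omega>.
        (\<forall>\<xi>. Re (cinner (B x *v \<xi>) \<xi>) \<ge> lam * (norm \<xi>)\<^sup>2) \<and>
        (\<forall>\<xi> \<sigma>. cmod (cinner (B x *v \<xi>) \<sigma>) \<le> Lam * norm \<xi> * norm \<sigma>)"
    unfolding ellA_def by blast
  have LB: "AE x in lebesgue_on \<Omega>.
        (\<forall>\<xi> \<sigma>. cmod (cinner (B x *v \<xi>) \<sigma>) \<le> Lam * norm \<xi> * norm \<sigma>)"
    using LB0 by (rule eventually_mono) blast
  obtain N :: nat where N: "\<not> (AE x in lebesgue_on \<Omega>. \<not> (0 < V x \<and> V x \<le> real N))"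
    using choose_N[OF assms(1,2)] by blast
  define e :: "complex^'n" where "e = axis undefined 1"
  define ne where "ne = norm e"
  define K where "K = Lam * (r - 1) * ne * ne"
  define t where "t = (K + 2) / \<bar>r - p\<bar>"
  have rp: "\<bar>r - p\<bar> > 0" using assms by simp
  have K0: "K \<ge> 0" using Lam assms by (simp add: K_def ne_def)
  have t0: "t > 0" using K0 rp by (simp add: t_def)
  have tK: "t * \<bar>r - p\<bar> = K + 2" using rp by (simp add: t_def)
  define f where "f x = (if 0 < V x \<and> V x \<le> real N then t * sqrt (V x) else 0)" for x
  define c where "c x = f x *\<^sub>R e" for x
  define b where "b x = (f x * (1 - p)) *\<^sub>R e" for x
  have Vm[measurable]: "V \<in> borel_measurable (lebesgue_on \<Omega>)"
    using assms(1) by (simp add: L1loc_nonneg_def)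
  have V0: "AE x in lebesgue_on \<Omega>. 0 \<le> V x"
    using assms(1) by (simp add: L1loc_nonneg_def)
  have fm[measurable]: "f \<in> borel_measurable (lebesgue_on \<Omega>)"
    unfolding f_def by measurable
  have fb: "\<bar>f x\<bar> \<le> t * sqrt (real N)" for x
    using t0 by (auto simp: f_def)
  have Linf_c: "Linf \<Omega> c"
    unfolding Linf_def
  proof
    show "c \<in> borel_measurable (lebesgue_on \<Omega>)" unfolding c_def by measurable
    have "norm (c x) \<le> t * sqrt (real N) * ne" for x
      unfolding c_def ne_def using fb[of x] by (simp add: mult_right_mono)
    then show "\<exists>C. AE x in lebesgue_on \<Omega>. norm (c x) \<le> C" by blast
  qed
  have Linf_b: "Linf \<Omega> b"
    unfolding Linf_def
  proof
    show "b \<in> borel_measurable (lebesgue_on \<Omega>)" unfolding b_def by measurable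
    have "norm (b x) \<le> t * sqrt (real N) * \<bar>1 - p\<bar> * ne" for x
      unfolding b_def ne_def using fb[of x] by (simp add: abs_mult mult_right_mono)
    then show "\<exists>C. AE x in lebesgue_on \<Omega>. norm (b x) \<le> C" by blast
  qed
  have p0: "p \<noteq> 0" "r \<noteq> 0" using assms by auto
  have Jc: "Jop s (c x) = (f x * (s - 1)) *\<^sub>R e" if "s \<noteq> 0" for s x
    using Jop_e[OF that, of "f x" undefined] by (simp add: c_def e_def)
  have bJp: "b x + Jop p (c x) = 0" for x
  proof -
    have "b x + Jop p (c x) = (f x * (1 - p) + f x * (p - 1)) *\<^sub>R e"
      unfolding Jc[OF p0(1)] b_def by (rule scaleR_add_left[symmetric])
    then show ?thesis by (simp add: algebra_simps)
  qed
  have bJr: "b x + Jop r (c x) = (f x * (r - p)) *\<^sub>R e" for x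
  proof -
    have "b x + Jop r (c x) = (f x * (1 - p) + f x * (r - 1)) *\<^sub>R e"
      unfolding Jc[OF p0(2)] b_def by (rule scaleR_add_left[symmetric])
    then show ?thesis by (simp add: algebra_simps)
  qed
  have Mcond: "\<exists>M>0. AE x in lebesgue_on \<Omega>. norm (b x - c x) \<le> M * sqrt (V x)"
  proof (intro exI conjI)
    show "t * p * ne + 1 > 0" using t0 assms(3) unfolding ne_def
      by (smt (verit) mult_nonneg_nonneg norm_ge_zero)
    show "AE x in lebesgue_on \<Omega>. norm (b x - c x) \<le> (t * p * ne + 1) * sqrt (V x)"
      using V0
    proof eventually_elim
      case (elim x)
      have "b x - c x = (- (f x * p)) *\<^sub>R e" unfolding b_def c_def
        by (simp add: scaleR_diff_left[symmetric] del: scaleR_diff_left) (simp add: algebra_simps)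
      then have nb: "norm (b x - c x) = \<bar>f x\<bar> * p * ne" using assms by (simp add: ne_def abs_mult)
      show ?case
      proof (cases "0 < V x \<and> V x \<le> real N")
        case True
        then have "\<bar>f x\<bar> * p * ne = (t * p * ne) * sqrt (V x)" using t0 by (simp add: f_def)
        also have "\<dots> \<le> (t * p * ne + 1) * sqrt (V x)" using elim by (simp add: mult_right_mono)
        finally show ?thesis using nb by simp
      next
        case False
        have "0 \<le> t * p * ne + 1" using t0 assms(3) unfolding ne_def
          by (smt (verit) mult_nonneg_nonneg norm_ge_zero)
        then have "0 \<le> (t * p * ne + 1) * sqrt (V x)" using elim by simp
        then show ?thesis using nb False by (simp add: f_def)
      qed
    qed
  qed
  have part_p: "classS \<Omega> p A b c V" if A: "ellA_s \<Omega> p A" for A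
  proof -
    obtain d where d: "d > 0" and D: "AE x in lebesgue_on \<Omega>. \<forall>\<xi>. Re (cinner (A x *v \<xi>) (Jop p \<xi>)) \<ge> d * (norm \<xi>)\<^sup>2"
      using Jop_coercive[OF A assms(3)] by blast
    have G: "\<exists>\<mu>>0. AE x in lebesgue_on \<Omega>. \<forall>\<xi>. Gamma p A b c V x \<xi> \<ge> \<mu> * ((norm \<xi>)\<^sup>2 + V x)"
    proof (intro exI conjI)
      show "min d 1 > 0" using d by simp
      show "AE x in lebesgue_on \<Omega>. \<forall>\<xi>. Gamma p A b c V x \<xi> \<ge> min d 1 * ((norm \<xi>)\<^sup>2 + V x)"
        using D V0
      proof eventually_elim
        case (elim x)
        show ?case
        proof
          fix \<xi> :: "complex^'n"
          have g: "Gamma p A b c V x \<xi> = Re (cinner (A x *v \<xi>) (Jop p \<xi>)) + V x"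
            by (simp add: Gamma_def bJp cinner_zero_left)
          have "min d 1 * (norm \<xi>)\<^sup>2 \<le> d * (norm \<xi>)\<^sup>2" by (simp add: mult_right_mono)
          moreover have "min d 1 * V x \<le> V x" using elim(2) d by (simp add: mult_left_le_one_le)
          ultimately show "Gamma p A b c V x \<xi> \<ge> min d 1 * ((norm \<xi>)\<^sup>2 + V x)"
            using elim(1) g by (simp add: distrib_left) (smt (verit))
        qed
      qed
    qed
    show ?thesis unfolding classS_def
      using A Linf_b Linf_c assms(1) Mcond G by (simp add: ellA_s_def)
  qed
  have part_r: "\<not> classS \<Omega> r B b c V"
  proof
    assume "classS \<Omega> r B b c V"
    then obtain \<mu> where mu: "\<mu> > 0" and G: "AE x in lebesgue_on \<Omega>. \<forall>\<xi>. Gamma r B b c V x \<xi> \<ge> \<mu> * ((norm \<xi>)\<^sup>2 + V x)"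
      unfolding classS_def by blast
    have "AE x in lebesgue_on \<Omega>. \<not> (0 < V x \<and> V x \<le> real N)"
      using G LB
    proof eventually_elim
      case (elim x)
      show ?case
      proof
        assume C: "0 < V x \<and> V x \<le> real N"
        define a where "a = - sgn (r - p) * sqrt (V x)"
        have a2: "a * a = V x" using C rp by (simp add: a_def sgn_if)
        have fx: "f x = t * sqrt (V x)" using C by (simp add: f_def)
        have ee1: "cinner e e = 1" by (simp add: e_def ee)
        have t1: "Re (cinner (B x *v (a *\<^sub>R e)) (Jop r (a *\<^sub>R e))) = a * a * (r - 1) * Re (cinner (B x *v e) e)"
          unfolding e_def Jop_e[OF p0(2)] by (simp add: mv_scaleR cinner_scaleR_left cinner_scaleR_right)
        have "Re (cinner (B x *v e) e) \<le> Lam * ne * ne"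
          using elim(2)[rule_format, of e e] complex_Re_le_cmod[of "cinner (B x *v e) e"] unfolding ne_def by linarith
        then have t1b: "Re (cinner (B x *v (a *\<^sub>R e)) (Jop r (a *\<^sub>R e))) \<le> K * V x"
          unfolding t1 a2 K_def using C assms
          by (simp add: mult_left_mono)
        have t2: "Re (cinner (b x + Jop r (c x)) (a *\<^sub>R e)) = f x * (r - p) * a"
          by (simp add: bJr cinner_scaleR_left cinner_scaleR_right ee1)
        have sq: "sqrt (V x) * sqrt (V x) = V x" using C by simp
        have sg: "(r - p) * sgn (r - p) = \<bar>r - p\<bar>" by (simp add: sgn_if)
        have "f x * (r - p) * a = - t * ((r - p) * sgn (r - p)) * (sqrt (V x) * sqrt (V x))"
        proof -
          have gen: "\<And>q::real. t * q * (r - p) * (- sgn (r - p) * q) = - t * ((r - p) * sgn (r - p)) * (q * q)"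
            by (simp add: algebra_simps)
          show ?thesis unfolding fx a_def by (rule gen)
        qed
        then have "f x * (r - p) * a = - (t * \<bar>r - p\<bar>) * V x"
          by (simp only: sq sg) simp
        then have t2b: "Re (cinner (b x + Jop r (c x)) (a *\<^sub>R e)) = - (K + 2) * V x"
          using t2 tK by simp
        have "Gamma r B b c V x (a *\<^sub>R e) \<le> - V x"
          unfolding Gamma_def using t1b t2b by (simp add: algebra_simps)
        moreover have "Gamma r B b c V x (a *\<^sub>R e) \<ge> \<mu> * ((norm (a *\<^sub>R e))\<^sup>2 + V x)"
          using elim(1) by blast
        moreover have "\<mu> * ((norm (a *\<^sub>R e))\<^sup>2 + V x) \<ge> 0" using mu C by simp
        ultimately show False using C by simp
      qed
    qed
    then show False using N by blast
  qed
  show ?thesis using Linf_b Linf_c part_p part_r by blast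
qed

theorem proposition3p3:
  fixes \<Omega> :: "(real^'n) set" and V :: "real^'n \<Rightarrow> real" and p r :: real
  assumes "open \<Omega>" and "\<Omega> \<noteq> {}"
    and "L1loc_nonneg \<Omega> V" and "\<not> (AE x in lebesgue_on \<Omega>. V x = 0)"
    and "1 < p" and "1 < r" and "p \<noteq> r"
  shows "(\<forall>B. ellA_s \<Omega> r B \<longrightarrow>
            (\<exists>b c. Linf \<Omega> b \<and> Linf \<Omega> c \<and>
               (\<forall>A. ellA_s \<Omega> p A \<longrightarrow> classS \<Omega> p A b c V) \<and>
               \<not> classS \<Omega> r B b c V))
       \<and> (\<forall>A. ellA_s \<Omega> p A \<and> ellA_s \<Omega> r A \<longrightarrow>
            (\<exists>b c. Linf \<Omega> b \<and> Linf \<Omega> c \<and> classS \<Omega> p A b c V \<and> \<not> classS \<Omega> r A b c V))"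
proof
  show "\<forall>B. ellA_s \<Omega> r B \<longrightarrow>
            (\<exists>b c. Linf \<Omega> b \<and> Linf \<Omega> c \<and>
               (\<forall>A. ellA_s \<Omega> p A \<longrightarrow> classS \<Omega> p A b c V) \<and>
               \<not> classS \<Omega> r B b c V)"
    using part1[OF assms(3-7)] by blast
  show "\<forall>A. ellA_s \<Omega> p A \<and> ellA_s \<Omega> r A \<longrightarrow>
            (\<exists>b c. Linf \<Omega> b \<and> Linf \<Omega> c \<and> classS \<Omega> p A b c V \<and> \<not> classS \<Omega> r A b c V)"
  proof (intro allI impI)
    fix A assume "ellA_s \<Omega> p A \<and> ellA_s \<Omega> r A"
    then show "\<exists>b c. Linf \<Omega> b \<and> Linf \<Omega> c \<and> classS \<Omega> p A b c V \<and> \<not> classS \<Omega> r A b c V"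
      using part1[OF assms(3-7), of A] by blast
  qed
qed

end
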